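(* Let $F$ be a field with $\mathrm{char}\,F\neq 2$, let $\lambda\in F$, and let $I_n$ be the $F$-algebra defined in the context. Then $\mathrm{rb}_\lambda(I_n)\le 2$. If $F$ is totally real, then $\mathrm{rb}_\lambda(I_n)=1$. If $F$ is quadratically closed and $n\ge 3$, then $\mathrm{rb}_\lambda(I_n)=2$.
   Context: $I_n$ denotes the $n$-dimensional (non-associative) algebra over $F$ with basis $e_1,\ldots,e_n$ and multiplication given by $e_n\cdot e_n=2e_n$, $e_n\cdot e_j=e_j$, $e_j\cdot e_j=e_n$ for $j=1,\ldots,n-1$, with all other products of basis elements equal to zero (extended bilinearly). A linear operator $R\colon A\to A$ is a Rota--Baxter operator of weight $\lambda\in F$ if $R(x)R(y)=R(R(x)y+xR(y)+\lambda xy)$ for all $x,y\in A$; $\mathrm{RB}_\lambda(A)$ is the set of such operators. The Rota--Baxter $\lambda$-index of $A$ is $\mathrm{rb}_\lambda(A)=\min\{m\in\mathbb{N}\mid \text{for every } R\in\mathrm{RB}_\lambda(A) \text{ there is } k\in\{0,\ldots,m\} \text{ with } R^k(R+\lambda\,\mathrm{id})^{m-k}=0\}$ (and $\infty$ if no such $m$ exists). A field $F$ is totally real if $\nu_1^2+\cdots+\nu_t^2=0$ with $\nu_i\in F$ implies all $\nu_i=0$; it is quadratically closed if every quadratic equation over $F$ has a solution in $F$. *)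

theory Defs
  imports "Jordan_Normal_Form.Matrix" "HOL-Library.Extended_Nat"
begin

text \<open>The algebra I_n on F^n, basis e_1..e_n encoded as indices 0..n-1 (e_n is index n-1).
  e_n e_n = 2 e_n, e_n e_j = e_j, e_j e_j = e_n (j<n), other products of basis elements 0.\<close>
definition I_mult :: "nat \<Rightarrow> 'a::field vec \<Rightarrow> 'a vec \<Rightarrow> 'a vec" where
  "I_mult n x y = vec n (\<lambda>i. if i = n - 1
      then 2 * x $ (n - 1) * y $ (n - 1) + (\<Sum>j<n - 1. x $ j * y $ j)
      else x $ (n - 1) * y $ i)"

definition is_RB :: "nat \<Rightarrow> 'a::field \<Rightarrow> 'a mat \<Rightarrow> bool" where
  "is_RB n lam R \<longleftrightarrow> R \<in> carrier_mat n n \<and>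
     (\<forall>x\<in>carrier_vec n. \<forall>y\<in>carrier_vec n.
        I_mult n (R *\<^sub>v x) (R *\<^sub>v y) =
        R *\<^sub>v (I_mult n (R *\<^sub>v x) y + I_mult n x (R *\<^sub>v y) + lam \<cdot>\<^sub>v I_mult n x y))"

definition rb_prop :: "nat \<Rightarrow> 'a::field \<Rightarrow> nat \<Rightarrow> bool" where
  "rb_prop n lam m \<longleftrightarrow> (\<forall>R. is_RB n lam R \<longrightarrow>
     (\<exists>k\<le>m. R ^\<^sub>m k * (R + lam \<cdot>\<^sub>m 1\<^sub>m n) ^\<^sub>m (m - k) = 0\<^sub>m n n))"

definition rb_index :: "nat \<Rightarrow> 'a::field \<Rightarrow> enat" where
  "rb_index n lam = (if \<exists>m. rb_prop n lam m then enat (LEAST m. rb_prop n lam m) else \<infinity>)"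

definition totally_real :: "'a::field itself \<Rightarrow> bool" where
  "totally_real _ \<longleftrightarrow> (\<forall>\<nu>::'a list. (\<Sum>v\<leftarrow>\<nu>. v ^ 2) = 0 \<longrightarrow> (\<forall>v\<in>set \<nu>. v = 0))"

definition quadratically_closed :: "'a::field itself \<Rightarrow> bool" where
  "quadratically_closed _ \<longleftrightarrow> (\<forall>a b c::'a. a \<noteq> 0 \<longrightarrow> (\<exists>x. a * x ^ 2 + b * x + c = 0))"

end

theory Submission
  imports Defs
begin

lemma mv_unit: "(R::'a::field mat) \<in> carrier_mat n n \<Longrightarrow> j < n \<Longrightarrow> R *\<^sub>v unit_vec n j = col R j"
  by (rule eq_vecI) auto

lemma I_mult_idx: "l < n \<Longrightarrow> I_mult n x y $ l = (if l = n - 1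
      then 2 * x $ (n - 1) * y $ (n - 1) + (\<Sum>j<n - 1. x $ j * y $ j)
      else x $ (n - 1) * y $ l)"
  unfolding I_mult_def by simp

lemma I_mult_dim[simp]: "dim_vec (I_mult n x y) = n"
  unfolding I_mult_def by simp

lemma I_mult_carrier[simp]: "I_mult n x y \<in> carrier_vec n"
  unfolding I_mult_def by simp

lemma RB_unit:
  assumes "is_RB n lam R" "s < n" "t < n"
  shows "I_mult n (col R s) (col R t) = R *\<^sub>v (I_mult n (col R s) (unit_vec n t) + I_mult n (unit_vec n s) (col R t) + lam \<cdot>\<^sub>v I_mult n (unit_vec n s) (unit_vec n t))"
proof -
  have R: "R \<in> carrier_mat n n" using assms(1) unfolding is_RB_def by auto
  show ?thesis using assms(1) unfolding is_RB_def
    using mv_unit[OF R assms(2)] mv_unit[OF R assms(3)] assms(2,3)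
    by (metis unit_vec_carrier)
qed

lemma RB_comp:
  assumes "is_RB (Suc N) lam R" "s < Suc N" "t < Suc N" "l < Suc N"
  shows "I_mult (Suc N) (col R s) (col R t) $ l = (R *\<^sub>v (I_mult (Suc N) (col R s) (unit_vec (Suc N) t) + I_mult (Suc N) (unit_vec (Suc N) s) (col R t) + lam \<cdot>\<^sub>v I_mult (Suc N) (unit_vec (Suc N) s) (unit_vec (Suc N) t))) $ l"
    using RB_unit[OF assms(1-3)] by simp

lemma RB_carrier: "is_RB n lam R \<Longrightarrow> R \<in> carrier_mat n n"
  unfolding is_RB_def by auto

lemma mult_if0: "(x::'a::semiring_0) * (if P then y else 0) = (if P then x * y else 0)"
  by simp

lemma sum_split_last: "(\<Sum>i\<in>{0..<Suc N}. f i) = (\<Sum>i<N. f i) + f N"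
  by (simp add: lessThan_atLeast0[symmetric])

lemma caseNN_l:
  assumes "is_RB (Suc N) lam R" "l < N"
  shows "R$$(N,N) * R$$(l,N) = (\<Sum>k<N. R$$(l,k) * R$$(k,N)) + R$$(l,N) * (4*R$$(N,N) + 2*lam)"
proof -
  have R: "R \<in> carrier_mat (Suc N) (Suc N)" using RB_carrier[OF assms(1)] .
  have e: "I_mult (Suc N) (col R (N)) (col R (N)) $ (l) = (R *\<^sub>v (I_mult (Suc N) (col R (N)) (unit_vec (Suc N) (N)) + I_mult (Suc N) (unit_vec (Suc N) (N)) (col R (N)) + lam \<cdot>\<^sub>v I_mult (Suc N) (unit_vec (Suc N) (N)) (unit_vec (Suc N) (N)))) $ (l)"
    using RB_comp[OF assms(1)] assms by simp
  show ?thesis using e R assms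
    by (simp add: I_mult_idx scalar_prod_def sum_split_last lessThan_atLeast0 mult_if0 distrib_left sum.distrib algebra_simps)
qed

lemma caseNN_N:
  assumes "is_RB (Suc N) lam R" 
  shows "2*R$$(N,N)*R$$(N,N) + (\<Sum>j<N. R$$(j,N) * R$$(j,N)) = (\<Sum>k<N. R$$(N,k) * R$$(k,N)) + R$$(N,N) * (4*R$$(N,N) + 2*lam)"
proof -
  have R: "R \<in> carrier_mat (Suc N) (Suc N)" using RB_carrier[OF assms(1)] .
  have e: "I_mult (Suc N) (col R (N)) (col R (N)) $ (N) = (R *\<^sub>v (I_mult (Suc N) (col R (N)) (unit_vec (Suc N) (N)) + I_mult (Suc N) (unit_vec (Suc N) (N)) (col R (N)) + lam \<cdot>\<^sub>v I_mult (Suc N) (unit_vec (Suc N) (N)) (unit_vec (Suc N) (N)))) $ (N)"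
    using RB_comp[OF assms(1)] assms by simp
  show ?thesis using e R assms
    by (simp add: I_mult_idx scalar_prod_def sum_split_last lessThan_atLeast0 mult_if0 distrib_left sum.distrib algebra_simps)
qed

lemma caseNt_l:
  assumes "is_RB (Suc N) lam R" "t < N" "l < N"
  shows "R$$(N,N) * R$$(l,t) = (\<Sum>k<N. R$$(l,k) * R$$(k,t)) + R$$(l,t) * (R$$(N,N) + lam) + R$$(l,N) * (R$$(t,N) + 2 * R$$(N,t))"
proof -
  have R: "R \<in> carrier_mat (Suc N) (Suc N)" using RB_carrier[OF assms(1)] .
  have e: "I_mult (Suc N) (col R (N)) (col R (t)) $ (l) = (R *\<^sub>v (I_mult (Suc N) (col R (N)) (unit_vec (Suc N) (t)) + I_mult (Suc N) (unit_vec (Suc N) (N)) (col R (t)) + lam \<cdot>\<^sub>v I_mult (Suc N) (unit_vec (Suc N) (N)) (unit_vec (Suc N) (t)))) $ (l)"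
    using RB_comp[OF assms(1)] assms by simp
  show ?thesis using e R assms
    by (simp add: I_mult_idx scalar_prod_def sum_split_last lessThan_atLeast0 mult_if0 distrib_left sum.distrib algebra_simps)
qed

lemma caseNt_N:
  assumes "is_RB (Suc N) lam R" "t < N"
  shows "2 * R$$(N,N) * R$$(N,t) + (\<Sum>j<N. R$$(j,N) * R$$(j,t)) = (\<Sum>k<N. R$$(N,k) * R$$(k,t)) + R$$(N,t) * (R$$(N,N) + lam) + R$$(N,N) * (R$$(t,N) + 2 * R$$(N,t))"
proof -
  have R: "R \<in> carrier_mat (Suc N) (Suc N)" using RB_carrier[OF assms(1)] .
  have e: "I_mult (Suc N) (col R (N)) (col R (t)) $ (N) = (R *\<^sub>v (I_mult (Suc N) (col R (N)) (unit_vec (Suc N) (t)) + I_mult (Suc N) (unit_vec (Suc N) (N)) (col R (t)) + lam \<cdot>\<^sub>v I_mult (Suc N) (unit_vec (Suc N) (N)) (unit_vec (Suc N) (t)))) $ (N)"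
    using RB_comp[OF assms(1)] assms by simp
  show ?thesis using e R assms
    by (simp add: I_mult_idx scalar_prod_def sum_split_last lessThan_atLeast0 mult_if0 distrib_left sum.distrib algebra_simps)
qed

lemma casesN_l:
  assumes "is_RB (Suc N) lam R" "s < N" "l < N"
  shows "R$$(N,s) * R$$(l,N) = R$$(l,N) * (2 * R$$(N,s) + R$$(s,N))"
proof -
  have R: "R \<in> carrier_mat (Suc N) (Suc N)" using RB_carrier[OF assms(1)] .
  have e: "I_mult (Suc N) (col R (s)) (col R (N)) $ (l) = (R *\<^sub>v (I_mult (Suc N) (col R (s)) (unit_vec (Suc N) (N)) + I_mult (Suc N) (unit_vec (Suc N) (s)) (col R (N)) + lam \<cdot>\<^sub>v I_mult (Suc N) (unit_vec (Suc N) (s)) (unit_vec (Suc N) (N)))) $ (l)"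
    using RB_comp[OF assms(1)] assms by simp
  show ?thesis using e R assms
    by (simp add: I_mult_idx scalar_prod_def sum_split_last lessThan_atLeast0 mult_if0 distrib_left sum.distrib algebra_simps)
qed

lemma casesN_N:
  assumes "is_RB (Suc N) lam R" "s < N"
  shows "2 * R$$(N,s) * R$$(N,N) + (\<Sum>j<N. R$$(j,s) * R$$(j,N)) = R$$(N,N) * (2 * R$$(N,s) + R$$(s,N))"
proof -
  have R: "R \<in> carrier_mat (Suc N) (Suc N)" using RB_carrier[OF assms(1)] .
  have e: "I_mult (Suc N) (col R (s)) (col R (N)) $ (N) = (R *\<^sub>v (I_mult (Suc N) (col R (s)) (unit_vec (Suc N) (N)) + I_mult (Suc N) (unit_vec (Suc N) (s)) (col R (N)) + lam \<cdot>\<^sub>v I_mult (Suc N) (unit_vec (Suc N) (s)) (unit_vec (Suc N) (N)))) $ (N)"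
    using RB_comp[OF assms(1)] assms by simp
  show ?thesis using e R assms
    by (simp add: I_mult_idx scalar_prod_def sum_split_last lessThan_atLeast0 mult_if0 distrib_left sum.distrib algebra_simps)
qed

lemma casest_N:
  assumes "is_RB (Suc N) lam R" "s < N" "t < N"
  shows "2 * R$$(N,s) * R$$(N,t) + (\<Sum>j<N. R$$(j,s) * R$$(j,t)) = R$$(N,s) * R$$(N,t) + R$$(N,N) * (R$$(t,s) + R$$(s,t) + (if s = t then lam else 0))"
proof -
  have R: "R \<in> carrier_mat (Suc N) (Suc N)" using RB_carrier[OF assms(1)] .
  have e: "I_mult (Suc N) (col R (s)) (col R (t)) $ (N) = (R *\<^sub>v (I_mult (Suc N) (col R (s)) (unit_vec (Suc N) (t)) + I_mult (Suc N) (unit_vec (Suc N) (s)) (col R (t)) + lam \<cdot>\<^sub>v I_mult (Suc N) (unit_vec (Suc N) (s)) (unit_vec (Suc N) (t)))) $ (N)"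
    using RB_comp[OF assms(1)] assms by simp
  show ?thesis using e R assms
    by (simp add: I_mult_idx scalar_prod_def sum_split_last lessThan_atLeast0 mult_if0 distrib_left sum.distrib algebra_simps)
qed

lemma ent:
  fixes R :: "'a::field mat"
  assumes R: "R \<in> carrier_mat (Suc N) (Suc N)" and "i < Suc N" "j < Suc N"
  shows "(R * (R + lam \<cdot>\<^sub>m 1\<^sub>m (Suc N)))$$(i,j) = (\<Sum>k<N. R$$(i,k)*R$$(k,j)) + R$$(i,N)*R$$(N,j) + lam * R$$(i,j)"
proof -
  have "(R * (R + lam \<cdot>\<^sub>m 1\<^sub>m (Suc N)))$$(i,j) = (\<Sum>k\<in>{0..<Suc N}. R$$(i,k) * (R$$(k,j) + lam * (if k = j then 1 else 0)))"
    using assms by (simp add: scalar_prod_def)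
  also have "\<dots> = (\<Sum>k\<in>{0..<Suc N}. R$$(i,k) * R$$(k,j)) + lam * R$$(i,j)"
    using assms by (simp add: distrib_left sum.distrib mult_if0 sum_distrib_left[symmetric] mult.left_commute[of _ lam])
  also have "\<dots> = (\<Sum>k<N. R$$(i,k)*R$$(k,j)) + R$$(i,N)*R$$(N,j) + lam * R$$(i,j)"
    by (simp only: sum_split_last)
  finally show ?thesis .
qed

lemma RB_main:
  fixes lam :: "'a::field"
  assumes RB: "is_RB (Suc N) lam R" and two: "(2::'a) \<noteq> 0"
  shows "R * (R + lam \<cdot>\<^sub>m 1\<^sub>m (Suc N)) = 0\<^sub>m (Suc N) (Suc N)"
proof -
  have R: "R \<in> carrier_mat (Suc N) (Suc N)" using RB_carrier[OF RB] .
  let ?c = "R$$(N,N)"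
  have pq: "R$$(i,N) * (R$$(N,j) + R$$(j,N)) = 0" if "i < N" "j < N" for i j
    using casesN_l[OF RB that(2,1)] by (simp add: algebra_simps)
  have colN: "(\<Sum>k<N. R$$(N,k)*R$$(k,t)) + R$$(N,t) * (?c + lam) = 0" if "t < N" for t
  proof -
    have a: "(\<Sum>j<N. R$$(j,N) * R$$(j,t)) = ?c * R$$(t,N)"
      using casesN_N[OF RB that] by (simp add: algebra_simps)
    show ?thesis using caseNt_N[OF RB that] a by (simp add: algebra_simps)
  qed
  have rowN: "R$$(i,N) * (2 * ?c + lam) = 0" if "i < N" for i
  proof (cases "R$$(i,N) = 0")
    case False
    then have q: "R$$(N,j) = - R$$(j,N)" if "j < N" for j
      using pq[OF \<open>i < N\<close> that] by (simp add: eq_neg_iff_add_eq_0)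
    have a: "(\<Sum>j<N. R$$(j,i) * R$$(j,N)) = ?c * R$$(i,N)"
      using casesN_N[OF RB that] by (simp add: algebra_simps)
    have b: "(\<Sum>k<N. R$$(N,k)*R$$(k,i)) = - (\<Sum>j<N. R$$(j,i) * R$$(j,N))"
      by (simp add: q sum_negf[symmetric] mult.commute)
    show ?thesis using colN[OF that] a b q[OF that] by (simp add: algebra_simps)
  qed simp
  have NN: "(\<Sum>k<N. R$$(N,k)*R$$(k,N)) + R$$(N,N)*R$$(N,N) + lam * R$$(N,N) = 0"
  proof -
    have z: "(\<Sum>j<N. R$$(j,N)*R$$(j,N) + R$$(N,j)*R$$(j,N)) = 0"
      by (rule sum.neutral) (use pq in \<open>auto simp: algebra_simps\<close>)
    have e: "2 * ((\<Sum>k<N. R$$(N,k)*R$$(k,N)) + R$$(N,N)*R$$(N,N) + lam * R$$(N,N)) = 0"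
      using caseNN_N[OF RB] z by (simp add: sum.distrib algebra_simps)
    show ?thesis using e two mult_eq_0_iff by blast
  qed
  show ?thesis
  proof (rule eq_matI)
    fix i j assume i: "i < dim_row (0\<^sub>m (Suc N) (Suc N) :: 'a mat)" and j: "j < dim_col (0\<^sub>m (Suc N) (Suc N) :: 'a mat)"
    then have i': "i < Suc N" and j': "j < Suc N" by auto
    have "(\<Sum>k<N. R$$(i,k)*R$$(k,j)) + R$$(i,N)*R$$(N,j) + lam * R$$(i,j) = 0"
    proof (cases "i < N")
      case iN: True
      show ?thesis
      proof (cases "j < N")
        case True
        have "(\<Sum>k<N. R$$(i,k)*R$$(k,j)) + R$$(i,j) * lam + R$$(i,N) * (R$$(j,N) + 2 * R$$(N,j)) = 0"
          using caseNt_l[OF RB True iN] by (simp add: algebra_simps)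
        moreover have "(\<Sum>k<N. R$$(i,k)*R$$(k,j)) + R$$(i,N)*R$$(N,j) + lam * R$$(i,j) =
           ((\<Sum>k<N. R$$(i,k)*R$$(k,j)) + R$$(i,j) * lam + R$$(i,N) * (R$$(j,N) + 2 * R$$(N,j)))
           - R$$(i,N) * (R$$(N,j) + R$$(j,N))"
          by (simp add: algebra_simps)
        ultimately show ?thesis using pq[OF iN True] by simp
      next
        case False
        then have jN: "j = N" using j' by simp
        have h: "(\<Sum>k<N. R$$(i,k)*R$$(k,N)) + R$$(i,N) * (4*R$$(N,N) + 2*lam) - R$$(N,N) * R$$(i,N) = 0"
          using caseNN_l[OF RB iN] by simp
        have "(\<Sum>k<N. R$$(i,k)*R$$(k,N)) + R$$(i,N)*R$$(N,N) + lam * R$$(i,N) =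
           ((\<Sum>k<N. R$$(i,k)*R$$(k,N)) + R$$(i,N) * (4*R$$(N,N) + 2*lam) - R$$(N,N) * R$$(i,N))
           - R$$(i,N) * (2 * ?c + lam)"
          by (simp add: algebra_simps)
        then show ?thesis using h rowN[OF iN] jN by simp
      qed
    next
      case False
      then have iN: "i = N" using i' by simp
      show ?thesis
      proof (cases "j < N")
        case True
        have "(\<Sum>k<N. R$$(N,k)*R$$(k,j)) + R$$(N,N)*R$$(N,j) + lam * R$$(N,j) =
            (\<Sum>k<N. R$$(N,k)*R$$(k,j)) + R$$(N,j) * (?c + lam)"
          by (simp add: algebra_simps)
        then show ?thesis using colN[OF True] iN by simp
      next
        case False
        then have jN: "j = N" using j' by simp
        show ?thesis using NN iN jN by simp
      qed
    qed
    then show "(R * (R + lam \<cdot>\<^sub>m 1\<^sub>m (Suc N))) $$ (i, j) = 0\<^sub>m (Suc N) (Suc N) $$ (i, j)"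
      unfolding ent[OF R i' j'] using i' j' by simp
  qed (use R in auto)
qed
lemma pq_lem: "is_RB (Suc N) lam R \<Longrightarrow> i < N \<Longrightarrow> j < N \<Longrightarrow> R$$(i,N) * (R$$(N,j) + R$$(j,N)) = 0"
  using casesN_l[of N lam R j i] by (simp add: algebra_simps)

lemma colN_lem:
  assumes RB: "is_RB (Suc N) lam R" and that: "t < N"
  shows "(\<Sum>k<N. R$$(N,k)*R$$(k,t)) + R$$(N,t) * (R$$(N,N) + lam) = 0"
proof -
  have a: "(\<Sum>j<N. R$$(j,N) * R$$(j,t)) = R$$(N,N) * R$$(t,N)"
    using casesN_N[OF RB that] by (simp add: algebra_simps)
  show ?thesis using caseNt_N[OF RB that] a by (simp add: algebra_simps)
qed

lemma rowN_lem:
  assumes RB: "is_RB (Suc N) lam R" and that: "i < N"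
  shows "R$$(i,N) * (2 * R$$(N,N) + lam) = 0"
proof (cases "R$$(i,N) = 0")
  case False
  then have q: "R$$(N,j) = - R$$(j,N)" if "j < N" for j
    using pq_lem[OF RB \<open>i < N\<close> that] by (simp add: eq_neg_iff_add_eq_0)
  have a: "(\<Sum>j<N. R$$(j,i) * R$$(j,N)) = R$$(N,N) * R$$(i,N)"
    using casesN_N[OF RB that] by (simp add: algebra_simps)
  have b: "(\<Sum>k<N. R$$(N,k)*R$$(k,i)) = - (\<Sum>j<N. R$$(j,i) * R$$(j,N))"
    by (simp add: q sum_negf[symmetric] mult.commute)
  show ?thesis using colN_lem[OF RB that] a b q[OF that] by (simp add: algebra_simps)
qed simp

lemma tr_sum:
  fixes f :: "nat \<Rightarrow> 'a::field"
  assumes TR: "totally_real TYPE('a)" and z: "a^2 + (\<Sum>j<N. f j ^ 2) = 0"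
  shows "a = 0 \<and> (\<forall>j<N. f j = 0)"
proof -
  have "(\<Sum>v\<leftarrow>(a # map f [0..<N]). v ^ 2) = a^2 + (\<Sum>j<N. f j ^ 2)"
    by (simp add: sum_set_upt_conv_sum_list_nat[symmetric] lessThan_atLeast0 o_def)
  then have "\<forall>v\<in>set (a # map f [0..<N]). v = 0" using TR z unfolding totally_real_def by metis
  then show ?thesis by auto
qed

lemma RB_TR:
  fixes lam :: "'a::field"
  assumes RB: "is_RB (Suc N) lam R" and two: "(2::'a) \<noteq> 0" and TR: "totally_real TYPE('a)"
  shows "R = 0\<^sub>m (Suc N) (Suc N) \<or> R + lam \<cdot>\<^sub>m 1\<^sub>m (Suc N) = 0\<^sub>m (Suc N) (Suc N)"
proof -
  have R: "R \<in> carrier_mat (Suc N) (Suc N)" using RB_carrier[OF RB] .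
  let ?c = "R$$(N,N)"
  have p0: "\<forall>i<N. R$$(i,N) = 0"
  proof (rule ccontr)
    assume "\<not> (\<forall>i<N. R$$(i,N) = 0)"
    then obtain i where i: "i < N" "R$$(i,N) \<noteq> 0" by auto
    have h: "2 * ?c + lam = 0" using rowN_lem[OF RB i(1)] i(2) by simp
    have l: "lam = - (2 * ?c)" using h by (metis add.commute eq_neg_iff_add_eq_0)
    have q: "R$$(N,j) = - R$$(j,N)" if "j < N" for j
      using pq_lem[OF RB i(1) that] i(2) by (simp add: eq_neg_iff_add_eq_0)
    have s: "(\<Sum>k<N. R$$(N,k) * R$$(k,N)) = - (\<Sum>j<N. R$$(j,N) * R$$(j,N))"
      by (simp add: q sum_negf[symmetric])
    have "2*?c*?c + (\<Sum>j<N. R$$(j,N) * R$$(j,N)) = - (\<Sum>j<N. R$$(j,N) * R$$(j,N))"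
      using caseNN_N[OF RB] s l by (simp add: algebra_simps)
    then have "2 * (?c*?c + (\<Sum>j<N. R$$(j,N) * R$$(j,N))) = 0"
      by (simp add: algebra_simps eq_neg_iff_add_eq_0)
    then have "?c*?c + (\<Sum>j<N. R$$(j,N) * R$$(j,N)) = 0"
      using two mult_eq_0_iff by blast
    then have "?c^2 + (\<Sum>j<N. R$$(j,N) ^ 2) = 0"
      by (simp add: power2_eq_square)
    from tr_sum[OF TR this] i show False by auto
  qed
  have cc: "?c * (?c + lam) = 0"
  proof -
    have "2*?c*?c = ?c * (4*?c + 2*lam)"
      using caseNN_N[OF RB] p0 by simp
    then have "2 * (?c * (?c + lam)) = 0" by (simp add: algebra_simps)
    then show ?thesis using two by simp
  qed
  have diag: "R$$(N,s)^2 + (\<Sum>j<N. R$$(j,s)^2) = ?c * (2 * R$$(s,s) + lam)" if "s < N" for s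
    using casest_N[OF RB that that] by (simp add: power2_eq_square algebra_simps)
  from cc have "?c = 0 \<or> ?c = - lam" by (auto simp: eq_neg_iff_add_eq_0)
  then show ?thesis
  proof
    assume c0: "?c = 0"
    have z: "R$$(N,s) = 0 \<and> (\<forall>j<N. R$$(j,s) = 0)" if "s < N" for s
      using tr_sum[OF TR, where a="R$$(N,s)" and N=N and f="\<lambda>j. R$$(j,s)"] diag[OF that] c0 by simp
    have "R = 0\<^sub>m (Suc N) (Suc N)"
    proof (rule eq_matI)
      fix i j assume "i < dim_row (0\<^sub>m (Suc N) (Suc N) :: 'a mat)" "j < dim_col (0\<^sub>m (Suc N) (Suc N) :: 'a mat)"
      then have i: "i < Suc N" and j: "j < Suc N" by auto
      have "R$$(i,j) = 0"
        using z p0 c0 i j by (cases "i < N"; cases "j < N") (auto simp: less_Suc_eq)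
      then show "R $$ (i, j) = 0\<^sub>m (Suc N) (Suc N) $$ (i, j)" using i j by simp
    qed (use R in auto)
    then show ?thesis ..
  next
    assume c0: "?c = - lam"
    have sq: "(\<Sum>j<N. (R$$(j,s) + (if j = s then lam else 0))^2) = (\<Sum>j<N. R$$(j,s)^2) + 2 * lam * R$$(s,s) + lam^2"
      if "s < N" for s
    proof -
      have "(\<Sum>j<N. (R$$(j,s) + (if j = s then lam else 0))^2) = (\<Sum>j<N. R$$(j,s)^2 + (if j = s then 2 * lam * R$$(j,s) + lam^2 else 0))"
        by (rule sum.cong) (auto simp: power2_eq_square algebra_simps)
      also have "\<dots> = (\<Sum>j<N. R$$(j,s)^2) + 2 * lam * R$$(s,s) + lam^2"
        using that by (simp add: sum.distrib)
      finally show ?thesis .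
    qed
    have z: "R$$(N,s) = 0 \<and> (\<forall>j<N. R$$(j,s) + (if j = s then lam else 0) = 0)" if "s < N" for s
    proof -
      have "R$$(N,s)^2 + (\<Sum>j<N. (R$$(j,s) + (if j = s then lam else 0))^2) = 0"
        using sq[OF that] diag[OF that] c0 by (simp add: algebra_simps power2_eq_square)
      then show ?thesis using tr_sum[OF TR, where a="R$$(N,s)" and N=N and f="\<lambda>j. R$$(j,s) + (if j = s then lam else 0)"] by simp
    qed
    have "R + lam \<cdot>\<^sub>m 1\<^sub>m (Suc N) = 0\<^sub>m (Suc N) (Suc N)"
    proof (rule eq_matI)
      fix i j assume "i < dim_row (0\<^sub>m (Suc N) (Suc N) :: 'a mat)" "j < dim_col (0\<^sub>m (Suc N) (Suc N) :: 'a mat)"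
      then have i: "i < Suc N" and j: "j < Suc N" by auto
      have "R$$(i,j) + (if i = j then lam else 0) = 0"
      proof (cases "j < N")
        case True
        then show ?thesis using z[OF True] i by (cases "i < N") (auto simp: less_Suc_eq)
      next
        case False
        then have "j = N" using j by simp
        then show ?thesis using p0 c0 i by (cases "i < N") (auto simp: less_Suc_eq)
      qed
      then show "(R + lam \<cdot>\<^sub>m 1\<^sub>m (Suc N)) $$ (i, j) = 0\<^sub>m (Suc N) (Suc N) $$ (i, j)"
        using i j R by (cases "i = j") auto
    qed (use R in auto)
    then show ?thesis ..
  qed
qed
lemma sum01:
  fixes n :: nat
  assumes "2 \<le> n" "\<And>b. 2 \<le> b \<Longrightarrow> f b = 0"
  shows "(\<Sum>b\<in>{0..<n}. f b) = f 0 + (f 1 :: 'a::comm_monoid_add)"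
proof -
  have "(\<Sum>b\<in>{0..<n}. f b) = (\<Sum>b\<in>{0,1}. f b)"
    by (rule sum.mono_neutral_right) (use assms in auto)
  then show ?thesis by simp
qed

lemma ex_RB:
  fixes lam ii :: "'a::field"
  assumes ii: "ii * ii = -1" and n: "3 \<le> n"
  shows "is_RB n lam (mat n n (\<lambda>(a,b). (if a = 0 then 1 else if a = 1 then ii else 0) * (if b = 0 then 1 - lam else if b = 1 then ii else 0)))"
    (is "is_RB n lam ?M")
proof -
  define X where "X = (\<lambda>a::nat. if a = 0 then 1 else if a = 1 then ii else (0::'a))"
  define phi where "phi = (\<lambda>v::'a vec. (1 - lam) * v$0 + ii * v$1)"
  have M: "?M = mat n n (\<lambda>(a,b). X a * (if b = 0 then 1 - lam else if b = 1 then ii else 0))"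
    unfolding X_def by simp
  have mv: "(?M *\<^sub>v x) $ a = X a * phi x" if "x \<in> carrier_vec n" "a < n" for x a
  proof -
    have "(?M *\<^sub>v x) $ a = (\<Sum>b\<in>{0..<n}. X a * (if b = 0 then 1 - lam else if b = 1 then ii else 0) * x $ b)"
      using that unfolding M by (simp add: scalar_prod_def)
    also have "\<dots> = X a * phi x"
      by (subst sum01) (use n in \<open>auto simp: phi_def algebra_simps\<close>)
    finally show ?thesis .
  qed
  have mvv: "?M *\<^sub>v x = vec n (\<lambda>a. X a * phi x)" if "x \<in> carrier_vec n" for x
    by (rule eq_vecI) (use that mv in auto)
  have n1: "Suc 0 \<noteq> n - Suc 0" "n - Suc 0 \<noteq> Suc 0" using n by auto
  have Xl: "X (n - 1) = 0" "X (n - Suc 0) = 0" using n unfolding X_def by auto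
  have LHS: "I_mult n (?M *\<^sub>v x) (?M *\<^sub>v y) = 0\<^sub>v n" if "x \<in> carrier_vec n" "y \<in> carrier_vec n" for x y
  proof (rule eq_vecI)
    fix l assume "l < dim_vec (0\<^sub>v n :: 'a vec)"
    then have l: "l < n" by simp
    have s: "(\<Sum>j<n - 1. (?M *\<^sub>v x) $ j * (?M *\<^sub>v y) $ j) = (\<Sum>j\<in>{0..<n - 1}. X j * phi x * (X j * phi y))"
    proof (rule sum.cong)
      fix j assume "j \<in> {0..<n - 1}"
      then have jn: "j < n" by auto
      show "(?M *\<^sub>v x) $ j * (?M *\<^sub>v y) $ j = X j * phi x * (X j * phi y)"
        by (simp only: mv[OF that(1) jn] mv[OF that(2) jn])
    qed (simp add: lessThan_atLeast0)
    also have "\<dots> = (1 + ii * ii) * (phi x * phi y)"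
      by (subst sum01) (use n in \<open>auto simp: X_def algebra_simps\<close>)
    also have "\<dots> = 0" using ii by simp
    finally have s0: "(\<Sum>j<n - 1. (?M *\<^sub>v x) $ j * (?M *\<^sub>v y) $ j) = 0" .
    show "I_mult n (?M *\<^sub>v x) (?M *\<^sub>v y) $ l = 0\<^sub>v n $ l"
      using l n s0 that unfolding mvv[OF that(1)] mvv[OF that(2)] by (simp add: I_mult_idx Xl)
  qed simp
  have RHS: "phi (I_mult n (?M *\<^sub>v x) y + I_mult n x (?M *\<^sub>v y) + lam \<cdot>\<^sub>v I_mult n x y) = 0"
    if "x \<in> carrier_vec n" "y \<in> carrier_vec n" for x y
  proof -
    have z0: "(I_mult n (?M *\<^sub>v x) y + I_mult n x (?M *\<^sub>v y) + lam \<cdot>\<^sub>v I_mult n x y) $ 0 = x$(n-1) * phi y + lam * (x$(n-1) * y$0)"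
      using that n unfolding mvv[OF that(1)] mvv[OF that(2)] by (simp add: I_mult_idx Xl X_def n1)
    have z1: "(I_mult n (?M *\<^sub>v x) y + I_mult n x (?M *\<^sub>v y) + lam \<cdot>\<^sub>v I_mult n x y) $ 1 = x$(n-1) * (ii * phi y) + lam * (x$(n-1) * y$1)"
      using that n unfolding mvv[OF that(1)] mvv[OF that(2)] by (simp add: I_mult_idx Xl X_def n1)
    have e: "(1 - lam) * (x$(n-1) * phi y + lam * (x$(n-1) * y$0)) + ii * (x$(n-1) * (ii * phi y) + lam * (x$(n-1) * y$1)) = 0"
    proof -
      have "(1 - lam) * (x$(n-1) * phi y + lam * (x$(n-1) * y$0)) + ii * (x$(n-1) * (ii * phi y) + lam * (x$(n-1) * y$1))
        = x$(n-1) * phi y * (1 + ii * ii) - lam * x$(n-1) * phi y + lam * x$(n-1) * ((1 - lam) * y$0 + ii * y$1)"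
        by (simp add: algebra_simps)
      also have "\<dots> = 0" using ii by (simp add: phi_def)
      finally show ?thesis .
    qed
    have p: "phi Z = (1 - lam) * Z$0 + ii * Z$1" for Z by (simp add: phi_def)
    show ?thesis by (subst p) (simp only: z0 z1 e)
  qed
  show ?thesis unfolding is_RB_def
  proof (intro conjI ballI)
    show "?M \<in> carrier_mat n n" by simp
    fix x y :: "'a vec" assume x: "x \<in> carrier_vec n" and y: "y \<in> carrier_vec n"
    show "I_mult n (?M *\<^sub>v x) (?M *\<^sub>v y) = ?M *\<^sub>v (I_mult n (?M *\<^sub>v x) y + I_mult n x (?M *\<^sub>v y) + lam \<cdot>\<^sub>v I_mult n x y)"
    proof (rule eq_vecI)
      fix l assume "l < dim_vec (?M *\<^sub>v (I_mult n (?M *\<^sub>v x) y + I_mult n x (?M *\<^sub>v y) + lam \<cdot>\<^sub>v I_mult n x y))"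
      then have l: "l < n" by simp
      have "(?M *\<^sub>v (I_mult n (?M *\<^sub>v x) y + I_mult n x (?M *\<^sub>v y) + lam \<cdot>\<^sub>v I_mult n x y)) $ l = 0"
        by (subst mv) (use l RHS[OF x y] in auto)
      then show "I_mult n (?M *\<^sub>v x) (?M *\<^sub>v y) $ l = (?M *\<^sub>v (I_mult n (?M *\<^sub>v x) y + I_mult n x (?M *\<^sub>v y) + lam \<cdot>\<^sub>v I_mult n x y)) $ l"
        using LHS[OF x y] l by simp
    qed simp
  qed
qed
lemma zero_RB: "is_RB n lam (0\<^sub>m n n :: 'a::field mat)"
  unfolding is_RB_def
proof (intro conjI ballI)
  fix x y :: "'a vec" assume x: "x \<in> carrier_vec n" and y: "y \<in> carrier_vec n"
  have "I_mult n (0\<^sub>m n n *\<^sub>v x) (0\<^sub>m n n *\<^sub>v y) = 0\<^sub>v n"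
    by (rule eq_vecI) (use x y in \<open>auto simp: I_mult_idx\<close>)
  moreover have "0\<^sub>m n n *\<^sub>v v = 0\<^sub>v n" if "v \<in> carrier_vec n" for v :: "'a vec"
    by (rule eq_vecI) (use that in \<open>auto simp: scalar_prod_def\<close>)
  moreover have "I_mult n (0\<^sub>m n n *\<^sub>v x) y + I_mult n x (0\<^sub>m n n *\<^sub>v y) + lam \<cdot>\<^sub>v I_mult n x y \<in> carrier_vec n"
    by simp
  ultimately show "I_mult n (0\<^sub>m n n *\<^sub>v x) (0\<^sub>m n n *\<^sub>v y) = 0\<^sub>m n n *\<^sub>v (I_mult n (0\<^sub>m n n *\<^sub>v x) y + I_mult n x (0\<^sub>m n n *\<^sub>v y) + lam \<cdot>\<^sub>v I_mult n x y)"
    by simp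
qed simp

lemma not_rb0: "1 \<le> n \<Longrightarrow> \<not> rb_prop n (lam::'a::field) 0"
proof
  assume n: "1 \<le> n" and P: "rb_prop n lam 0"
  then obtain k where "k \<le> 0" "(0\<^sub>m n n :: 'a mat) ^\<^sub>m k * (0\<^sub>m n n + lam \<cdot>\<^sub>m 1\<^sub>m n) ^\<^sub>m (0 - k) = 0\<^sub>m n n"
    unfolding rb_prop_def using zero_RB[of n lam] by blast
  then have "(1\<^sub>m n :: 'a mat) * 1\<^sub>m n = 0\<^sub>m n n" by simp
  then have "(1\<^sub>m n :: 'a mat) = 0\<^sub>m n n" using left_mult_one_mat[OF one_carrier_mat[of n]] by simp
  then have "(1\<^sub>m n :: 'a mat) $$ (0,0) = 0\<^sub>m n n $$ (0,0)" by simp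
  then show False using n by simp
qed

lemma pow1: "R \<in> carrier_mat n n \<Longrightarrow> R ^\<^sub>m 1 = R"
  by simp

lemma rb2: "(2::'a::field) \<noteq> 0 \<Longrightarrow> rb_prop (Suc N) (lam::'a) 2"
  unfolding rb_prop_def
proof (intro allI impI)
  fix R assume RB: "is_RB (Suc N) lam R" and two: "(2::'a) \<noteq> 0"
  have R: "R \<in> carrier_mat (Suc N) (Suc N)" using RB_carrier[OF RB] .
  have R2: "R + lam \<cdot>\<^sub>m 1\<^sub>m (Suc N) \<in> carrier_mat (Suc N) (Suc N)" using R by simp
  have "R ^\<^sub>m 1 * (R + lam \<cdot>\<^sub>m 1\<^sub>m (Suc N)) ^\<^sub>m (2 - 1) = 0\<^sub>m (Suc N) (Suc N)"
    using RB_main[OF RB two] pow1[OF R] pow1[OF R2] by (simp add: numeral_2_eq_2)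
  then show "\<exists>k\<le>2. R ^\<^sub>m k * (R + lam \<cdot>\<^sub>m 1\<^sub>m (Suc N)) ^\<^sub>m (2 - k) = 0\<^sub>m (Suc N) (Suc N)"
    by (intro exI[of _ 1]) simp
qed

lemma rb1_iff: "is_RB n lam R \<Longrightarrow> (\<exists>k\<le>1. R ^\<^sub>m k * (R + lam \<cdot>\<^sub>m 1\<^sub>m n) ^\<^sub>m (1 - k) = 0\<^sub>m n n) \<longleftrightarrow> (R + lam \<cdot>\<^sub>m 1\<^sub>m n = 0\<^sub>m n n \<or> R = 0\<^sub>m n n)"
proof -
  assume RB: "is_RB n lam R"
  have R: "R \<in> carrier_mat n n" using RB_carrier[OF RB] .
  have R2: "R + lam \<cdot>\<^sub>m 1\<^sub>m n \<in> carrier_mat n n" using R by simp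
  have k0: "R ^\<^sub>m 0 * (R + lam \<cdot>\<^sub>m 1\<^sub>m n) ^\<^sub>m 1 = R + lam \<cdot>\<^sub>m 1\<^sub>m n"
    using R R2 pow1[OF R2] by simp
  have k1: "R ^\<^sub>m 1 * (R + lam \<cdot>\<^sub>m 1\<^sub>m n) ^\<^sub>m 0 = R"
    using R R2 pow1[OF R] by simp
  have "(\<exists>k\<le>1. P k) \<longleftrightarrow> P 0 \<or> P 1" for P :: "nat \<Rightarrow> bool"
    by (metis le_Suc_eq le_zero_eq One_nat_def)
  then show ?thesis using k0 k1 by simp
qed

theorem corollary3:
  fixes n :: nat and lam :: "'a::field"
  assumes "(2::'a) \<noteq> 0" and "n \<ge> 1"
  shows "rb_index n lam \<le> 2
    \<and> (totally_real TYPE('a) \<longrightarrow> rb_index n lam = 1)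
    \<and> (quadratically_closed TYPE('a) \<and> n \<ge> 3 \<longrightarrow> rb_index n lam = 2)"
proof -
  obtain N where N: "n = Suc N" using assms(2) by (cases n) auto
  have P2: "rb_prop n lam 2" unfolding N by (rule rb2[OF assms(1)])
  have nP0: "\<not> rb_prop n lam 0" by (rule not_rb0[OF assms(2)])
  have idx: "rb_index n lam = enat (LEAST m. rb_prop n lam m)"
    unfolding rb_index_def using P2 by auto
  have A: "rb_index n lam \<le> 2"
    unfolding idx using Least_le[of "rb_prop n lam" 2, OF P2] by (simp add: numeral_eq_enat)
  have B: "rb_index n lam = 1" if TR: "totally_real TYPE('a)"
  proof -
    have P1: "rb_prop n lam 1"
      unfolding rb_prop_def
    proof (intro allI impI)
      fix R assume RB: "is_RB n lam R"
      show "\<exists>k\<le>1. R ^\<^sub>m k * (R + lam \<cdot>\<^sub>m 1\<^sub>m n) ^\<^sub>m (1 - k) = 0\<^sub>m n n"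
        unfolding rb1_iff[OF RB] using RB_TR[OF RB[unfolded N] assms(1) TR] N by auto
    qed
    have "(LEAST m. rb_prop n lam m) = 1"
    proof (rule Least_equality)
      show "rb_prop n lam 1" by (rule P1)
      fix y assume "rb_prop n lam y" then show "1 \<le> y" using nP0 by (cases y) auto
    qed
    then show ?thesis unfolding idx by (simp add: one_enat_def)
  qed
  have C: "rb_index n lam = 2" if QC: "quadratically_closed TYPE('a)" and n3: "n \<ge> 3"
  proof -
    obtain ii :: 'a where "1 * ii^2 + 0 * ii + 1 = 0"
      using QC unfolding quadratically_closed_def by (metis one_neq_zero)
    then have ii: "ii * ii = -1" by (simp add: power2_eq_square eq_neg_iff_add_eq_0)
    have nP1: "\<not> rb_prop n lam 1"
    proof
      assume P1: "rb_prop n lam 1"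
      let ?M = "mat n n (\<lambda>(a,b). (if a = 0 then 1 else if a = 1 then ii else 0) * (if b = 0 then 1 - lam else if b = 1 then ii else 0)) :: 'a mat"
      have RB: "is_RB n lam ?M" by (rule ex_RB[OF ii n3])
      have "?M + lam \<cdot>\<^sub>m 1\<^sub>m n = 0\<^sub>m n n \<or> ?M = 0\<^sub>m n n"
        using P1 RB rb1_iff[OF RB] unfolding rb_prop_def by blast
      moreover have "ii \<noteq> 0" using ii by auto
      ultimately show False
      proof (elim disjE)
        assume "?M + lam \<cdot>\<^sub>m 1\<^sub>m n = 0\<^sub>m n n"
        then have "(?M + lam \<cdot>\<^sub>m 1\<^sub>m n) $$ (0,1) = 0\<^sub>m n n $$ (0,1)" by simp
        then show False using n3 \<open>ii \<noteq> 0\<close> by simp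
      next
        assume "?M = 0\<^sub>m n n"
        then have "?M $$ (0,1) = 0\<^sub>m n n $$ (0,1)" by simp
        then show False using n3 \<open>ii \<noteq> 0\<close> by simp
      qed
    qed
    have "(LEAST m. rb_prop n lam m) = 2"
    proof (rule Least_equality)
      show "rb_prop n lam 2" by (rule P2)
      fix y assume "rb_prop n lam y" then show "2 \<le> y" using nP0 nP1
        by (metis One_nat_def less_2_cases not_le)
    qed
    then show ?thesis unfolding idx by (simp add: numeral_eq_enat)
  qed
  show ?thesis using A B C by blast
qed
end
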